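(* Let $Y$ be a real random variable. Each of the following conditions implies $\mathbb{E}e^{tY}<e^{t^2}$ for all real $t\neq0$: (1) $\mathbb{E}Y=0$ and $\chi^2(Y,\mathcal N)<\inf_{x>0}\frac{(e^{x/2}-1)^2}{e^x-1-x}=\frac12$; (2) $\mathbb{E}Y=0$, $\mathbb{E}Y^2=1$ and $\chi^2(Y,\mathcal N)<\min_{x>0}\frac{(e^{x/2}-1)^2}{e^x-1-x-\frac{x^2}{2}}=0.96116\ldots$; (3) $Y$ is symmetric (i.e. $-Y$ has the same distribution as $Y$) with $\mathbb{E}Y=0$, $\mathbb{E}Y^2=1$, and $\chi^2(Y,\mathcal N)<\min_{x>0}\frac{(e^{x/2}-1)^2}{\frac{e^x+e^{-x}}{2}-1-\frac{x^2}{2}}=1.97044\ldots$.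
   Context: $\varphi(x)=e^{-x^2/2}/\sqrt{2\pi}$. For a real random variable $Y$ with density $p$, $\chi^2(Y,\mathcal N)=\int_{-\infty}^{\infty}\left(\frac{p(x)}{\varphi(x)}-1\right)^2\varphi(x)\,dx$ (taken to be $+\infty$ if $Y$ has no density). *)

theory Defs
  imports "HOL-Probability.Probability"
begin

definition std_normal_density :: "real \<Rightarrow> real" where
  "std_normal_density x = exp (- (x^2) / 2) / sqrt (2 * pi)"

text \<open>The value does not depend on the
  choice of density (densities agree a.e.).\<close>
definition chi2_normal :: "'a measure \<Rightarrow> ('a \<Rightarrow> real) \<Rightarrow> ennreal" where
  "chi2_normal M Y =
     (if \<exists>p. distributed M lborel Y p
      then (let p = (SOME p. distributed M lborel Y p) in
              \<integral>\<^sup>+ x. ennreal ((enn2real (p x) / std_normal_density x - 1)^2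
                               * std_normal_density x) \<partial>lborel)
      else \<infinity>)"

definition const1 :: real where
  "const1 = Inf {(exp (x/2) - 1)^2 / (exp x - 1 - x) | x::real. x > 0}"

definition const2 :: real where
  "const2 = Inf {(exp (x/2) - 1)^2 / (exp x - 1 - x - x^2/2) | x::real. x > 0}"

definition const3 :: real where
  "const3 = Inf {(exp (x/2) - 1)^2 / ((exp x + exp (-x))/2 - 1 - x^2/2) | x::real. x > 0}"

end

theory Submission
  imports Defs
begin


lemma phi_eq: "Defs.std_normal_density x = normal_density 0 1 x"
  unfolding Defs.std_normal_density_def normal_density_def by simp

lemma nd_shift: "normal_density 0 1 x * exp (u*x) = exp (u^2/2) * normal_density u 1 x"
proof -
  have "exp (- x\<^sup>2 / 2) * exp (u*x) = exp (u^2/2) * exp (- (x-u)\<^sup>2 / 2)"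
    unfolding exp_add[symmetric] by (rule arg_cong[where f=exp]) (simp add: power2_eq_square field_simps)
  then show ?thesis unfolding normal_density_def by (simp add: field_simps)
qed

lemma L1:
  "has_bochner_integral lborel (\<lambda>x. normal_density 0 1 x * exp (u*x) * (a + b*x + c*x^2))
     (exp (u^2/2) * (a + b*u + c*(1+u^2)))"
proof -
  have i0: "has_bochner_integral lborel (\<lambda>x. normal_density u 1 x) 1"
    using has_bochner_integral_integrable[of lborel] integral_normal_density[of 1 u]
    by (metis has_bochner_integral_integral_eq integrable_normal_density has_bochner_integral_iff zero_less_one)
  have i1: "has_bochner_integral lborel (\<lambda>x. normal_density u 1 x * x) u"
    by (rule normal_moment_nz_1) simp
  have i2': "has_bochner_integral lborel (\<lambda>x. normal_density u 1 x * (x - u)^(2*1)) 1"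
    using normal_moment_even[of 1 u 1] by simp
  have i2: "has_bochner_integral lborel (\<lambda>x. normal_density u 1 x * x^2) (1 + u^2)"
  proof -
    have "has_bochner_integral lborel (\<lambda>x. normal_density u 1 x * (x - u)^(2*1) + 2*u*(normal_density u 1 x * x) - u^2 * normal_density u 1 x) (1 + 2*u*u - u^2*1)"
      by (intro has_bochner_integral_add has_bochner_integral_diff has_bochner_integral_mult_right i0 i1 i2')
    then show ?thesis
      by (rule has_bochner_integral_cong[THEN iffD1, rotated -1]) (auto simp: power2_eq_square algebra_simps)
  qed
  have "has_bochner_integral lborel (\<lambda>x. exp (u^2/2) * (a * normal_density u 1 x + b * (normal_density u 1 x * x) + c * (normal_density u 1 x * x^2)))
     (exp (u^2/2) * (a * 1 + b*u + c*(1+u^2)))"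
    by (intro has_bochner_integral_add has_bochner_integral_mult_right i0 i1 i2)
  note hb = this
  have eq: "normal_density 0 1 x * exp (u*x) * (a + b*x + c*x^2) = exp (u^2/2) * (a * normal_density u 1 x + b * (normal_density u 1 x * x) + c * (normal_density u 1 x * x^2))" for x
    by (simp add: nd_shift algebra_simps)
  show ?thesis
    by (rule has_bochner_integral_cong[THEN iffD1, OF refl _ _ hb]) (simp_all add: eq)
qed

lemma L2:
  "has_bochner_integral lborel (\<lambda>x. normal_density 0 1 x * (a + b*x + c*x^2)^2)
     (a^2 + b^2 + 2*a*c + 3*c^2)"
proof -
  have m: "has_bochner_integral lborel (\<lambda>x. normal_density 0 1 x * x^k) (if k = 0 then 1 else if k = 2 then 1 else if k = 4 then 3 else 0)"
    if "k \<in> {0,1,2,3,4}" for k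
  proof -
    have e: "has_bochner_integral lborel (\<lambda>x. normal_density 0 1 x * x^(2*j)) (fact (2 * j) / (2^j * fact j))" for j
      using std_normal_moment_even[of j] by simp
    have o: "has_bochner_integral lborel (\<lambda>x. normal_density 0 1 x * x^(2*j+1)) 0" for j
      using std_normal_moment_odd[of j] by simp
    show ?thesis using that e[of 0] e[of 1] e[of 2] o[of 0] o[of 1]
      by (auto simp: fact_numeral)
  qed
  have "has_bochner_integral lborel (\<lambda>x. a^2 * (normal_density 0 1 x * x^0) + 2*a*b * (normal_density 0 1 x * x^1)
      + (b^2 + 2*a*c) * (normal_density 0 1 x * x^2) + 2*b*c * (normal_density 0 1 x * x^3) + c^2 * (normal_density 0 1 x * x^4))
     (a^2 * 1 + 2*a*b*0 + (b^2+2*a*c)*1 + 2*b*c*0 + c^2*3)"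
    using m[of 0] m[of 1] m[of 2] m[of 3] m[of 4] by (intro has_bochner_integral_add has_bochner_integral_mult_right; simp)
  then show ?thesis
    by (rule has_bochner_integral_cong[THEN iffD1, rotated -1]) (auto simp: power2_eq_square eval_nat_numeral algebra_simps)
qed

lemma exp2: "exp ((2*t)*x) = exp (t*x) * exp (t*x)" for t x :: real
  by (simp add: exp_add[symmetric] algebra_simps)
lemma exp2': "exp (x*(t*2)) = exp (x*t) * exp (x*t)" for t x :: real
  by (simp add: exp_add[symmetric] algebra_simps)

lemma Vexp:
  "has_bochner_integral lborel (\<lambda>x. normal_density 0 1 x * (exp (t*x) - (a + b*x + c*x^2))^2)
     (exp (2*t^2) - 2*(exp (t^2/2)*(a+b*t+c*(1+t^2))) + (a^2 + b^2 + 2*a*c + 3*c^2))"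
proof -
  have hb: "has_bochner_integral lborel (\<lambda>x. normal_density 0 1 x * exp ((2*t)*x) * (1 + 0*x + 0*x^2)
     - 2 * (normal_density 0 1 x * exp (t*x) * (a + b*x + c*x^2)) + normal_density 0 1 x * (a + b*x + c*x^2)^2)
     (exp ((2*t)^2/2) * (1 + 0*(2*t) + 0*(1+(2*t)^2)) - 2*(exp (t^2/2)*(a+b*t+c*(1+t^2))) + (a^2 + b^2 + 2*a*c + 3*c^2))"
    by (intro has_bochner_integral_add has_bochner_integral_diff has_bochner_integral_mult_right L1 L2)
  show ?thesis
    by (rule has_bochner_integral_cong[THEN iffD1, OF refl _ _ hb])
       (simp_all add: exp2 exp2' power2_eq_square algebra_simps)
qed

lemma Vcosh:
  "has_bochner_integral lborel (\<lambda>x. normal_density 0 1 x * (cosh (t*x) - (a + b*x + c*x^2))^2)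
     ((exp (2*t^2) + 1)/2 - 2*(exp (t^2/2)*(a+c*(1+t^2))) + (a^2 + b^2 + 2*a*c + 3*c^2))"
proof -
  have hb: "has_bochner_integral lborel (\<lambda>x. (1/4) * (normal_density 0 1 x * exp ((2*t)*x) * (1 + 0*x + 0*x^2))
     + (1/4) * (normal_density 0 1 x * exp ((-2*t)*x) * (1 + 0*x + 0*x^2)) + (1/2) * (normal_density 0 1 x * exp (0*x) * (1 + 0*x + 0*x^2))
     - (normal_density 0 1 x * exp (t*x) * (a + b*x + c*x^2)) - (normal_density 0 1 x * exp ((-t)*x) * (a + b*x + c*x^2))
     + normal_density 0 1 x * (a + b*x + c*x^2)^2)
     ((1/4) * (exp ((2*t)^2/2) * (1 + 0*(2*t) + 0*(1+(2*t)^2))) + (1/4) * (exp ((-2*t)^2/2) * (1 + 0*(-2*t) + 0*(1+(-2*t)^2)))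
      + (1/2) * (exp (0^2/2) * (1 + 0*0 + 0*(1+0^2)))
      - (exp (t^2/2)*(a+b*t+c*(1+t^2))) - (exp ((-t)^2/2)*(a+b*(-t)+c*(1+(-t)^2))) + (a^2 + b^2 + 2*a*c + 3*c^2))"
    by (intro has_bochner_integral_add has_bochner_integral_diff has_bochner_integral_mult_right L1 L2)
  have e1: "exp ((-2*t)*x) = exp (-(t*x)) * exp (-(t*x))" for x
    by (simp add: exp_add[symmetric] algebra_simps)
  have e2: "exp (t*x) * exp (-(t*x)) = 1" for x
    by (simp add: exp_add[symmetric])
  have eqc: "(1/4) * (normal_density 0 1 x * exp ((2*t)*x) * (1 + 0*x + 0*x^2))
     + (1/4) * (normal_density 0 1 x * exp ((-2*t)*x) * (1 + 0*x + 0*x^2)) + (1/2) * (normal_density 0 1 x * exp (0*x) * (1 + 0*x + 0*x^2))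
     - (normal_density 0 1 x * exp (t*x) * (a + b*x + c*x^2)) - (normal_density 0 1 x * exp ((-t)*x) * (a + b*x + c*x^2))
     + normal_density 0 1 x * (a + b*x + c*x^2)^2 = normal_density 0 1 x * (cosh (t*x) - (a + b*x + c*x^2))^2" for x
  proof -
    have g: "(1/4) * (n * (E*E) * (1 + 0*x + 0*x^2)) + (1/4) * (n * (F*F) * (1 + 0*x + 0*x^2)) + (1/2) * (n * 1 * (1 + 0*x + 0*x^2))
       - n * E * P - n * F * P + n * P^2 = n * ((E + F)/2 - P)^2" if "E * F = 1" for n E F P :: real
      using that by (simp add: power2_eq_square field_simps)
    have e1': "exp (-(2*t*x)) = exp (-(t*x)) * exp (-(t*x))"
      by (simp add: exp_add[symmetric])
    show ?thesis
      using g[of "exp(t*x)" "exp(-(t*x))" "normal_density 0 1 x" "a+b*x+c*x^2", OF e2]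
      by (simp add: cosh_field_def exp2 e1')
  qed
  show ?thesis
    by (rule has_bochner_integral_cong[THEN iffD1, OF refl _ _ hb]) (simp_all only: eqc, simp add: power2_eq_square algebra_simps)
qed

lemma main:
  fixes q h :: "real \<Rightarrow> real"
  assumes qm: "q \<in> borel_measurable borel" and q0: "\<And>x. 0 \<le> q x"
   and hm: "h \<in> borel_measurable borel" and h0: "\<And>x. 0 \<le> h x"
   and hH: "has_bochner_integral lborel (\<lambda>x. normal_density 0 1 x * h x) H"
   and hV: "has_bochner_integral lborel (\<lambda>x. normal_density 0 1 x * (h x - (a + b*x + c*x^2))^2) V"
   and hP: "has_bochner_integral lborel (\<lambda>x. q x * (a + b*x + c*x^2)) (a + c)"
   and hC: "has_bochner_integral lborel (\<lambda>x. (q x / normal_density 0 1 x - 1)^2 * normal_density 0 1 x) C"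
   and V0: "0 < V" and T0: "0 < T" and CV: "C * V < T^2"
  shows "(\<integral>\<^sup>+x. ennreal (h x * q x) \<partial>lborel) < ennreal (H + T)"
proof -
  define l where "l = T / V"
  have l0: "0 < l" using V0 T0 by (simp add: l_def)
  let ?P = "\<lambda>x. a + b*x + c*x^2"
  let ?F = "\<lambda>x. normal_density 0 1 x * h x + (l * (normal_density 0 1 x * (h x - ?P x)^2)
      + (1/l) * ((q x / normal_density 0 1 x - 1)^2 * normal_density 0 1 x)) / 2 + q x * ?P x - normal_density 0 1 x * ?P x"
  have hPphi: "has_bochner_integral lborel (\<lambda>x. normal_density 0 1 x * ?P x) (a + c)"
    using L1[of 0 a b c] by simp
  have hF: "has_bochner_integral lborel ?F (H + (l * V + (1/l) * C) / 2 + (a + c) - (a + c))"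
    by (intro has_bochner_integral_add has_bochner_integral_diff has_bochner_integral_mult_right
        has_bochner_integral_divide_zero hH hV hP hC hPphi)
  have pw: "h x * q x \<le> ?F x" for x
  proof -
    define p where "p = normal_density 0 1 x"
    have p0: "0 < p" by (simp add: p_def normal_density_pos)
    define A where "A = h x - ?P x"
    define B where "B = q x / p - 1"
    have qe: "q x = p * (B + 1)" using p0 by (simp add: B_def)
    have amgm: "A * B \<le> (l * A^2 + (1/l) * B^2) / 2"
    proof -
      have "0 \<le> (l*A - B)^2" by simp
      then have i: "2 * l * (A * B) \<le> l^2 * A^2 + B^2"
        by (simp add: power2_eq_square algebra_simps)
      have e: "(l * A^2 + (1/l) * B^2) / 2 = (l^2*A^2 + B^2)/(2*l)"
        using l0 by (simp add: field_simps power2_eq_square)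
      show ?thesis unfolding e using l0 i by (simp add: pos_le_divide_eq algebra_simps)
    qed
    have "h x * q x = p * h x + p * (A * B) + q x * ?P x - p * ?P x"
      unfolding qe A_def by (simp add: algebra_simps)
    also have "\<dots> \<le> p * h x + p * ((l * A^2 + (1/l) * B^2) / 2) + q x * ?P x - p * ?P x"
      using amgm p0 by (simp add: mult_left_mono)
    also have "\<dots> = ?F x" unfolding A_def B_def p_def by (simp add: algebra_simps)
    finally show ?thesis .
  qed
  have F0: "0 \<le> ?F x" for x
  proof -
    have "0 \<le> h x * q x" using h0[of x] q0[of x] by simp
    then show ?thesis using pw[of x] by linarith
  qed
  have "(\<integral>\<^sup>+x. ennreal (h x * q x) \<partial>lborel) \<le> (\<integral>\<^sup>+x. ennreal (?F x) \<partial>lborel)"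
    by (intro nn_integral_mono ennreal_leI pw)
  also have "\<dots> = ennreal (H + (l * V + (1/l) * C) / 2 + (a + c) - (a + c))"
    using hF F0 by (subst nn_integral_eq_integral) (auto simp: has_bochner_integral_iff)
  also have "\<dots> < ennreal (H + T)"
  proof -
    have "l * V = T" using V0 by (simp add: l_def)
    moreover have "(1/l) * C < T"
      using CV V0 T0 by (simp add: l_def field_simps power2_eq_square)
    moreover have "0 \<le> H"
    proof -
      have "H = integral\<^sup>L lborel (\<lambda>x. normal_density 0 1 x * h x)"
        using hH by (simp add: has_bochner_integral_iff)
      also have "0 \<le> \<dots>" by (rule integral_nonneg_AE) (simp add: h0)
      finally show ?thesis by simp
    qed
    ultimately show ?thesis using T0 by (intro ennreal_lessI) auto
  qed
  finally show ?thesis .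
qed



lemma exp_taylor3: fixes y :: real assumes "y \<noteq> 0" shows "1 + y + y^2/2 + y^3/6 < exp y"
proof -
  obtain s where "exp y = (\<Sum>m<4. y ^ m / fact m) + exp s / fact 4 * y ^ 4"
    using Maclaurin_exp_lt[OF assms, of 4] by auto
  moreover have "(\<Sum>m<4. y ^ m / fact m) = 1 + y + y^2/2 + y^3/6"
    by (simp add: eval_nat_numeral fact_numeral)
  moreover have "0 < exp s / fact 4 * y ^ 4" using assms by simp
  ultimately show ?thesis by linarith
qed

lemma D1pos: "0 < x \<Longrightarrow> 0 < exp x - 1 - (x::real)"
proof -
  assume x: "0 < x"
  have "0 < x^2" "0 < x^3" using x by simp_all
  then show ?thesis using exp_taylor3[of x] x by linarith
qed
lemma D2pos: "0 < x \<Longrightarrow> 0 < exp x - 1 - x - (x::real)^2/2"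
proof -
  assume x: "0 < x"
  have "0 < x^3" using x by simp_all
  then show ?thesis using exp_taylor3[of x] x by linarith
qed
lemma D3pos: "0 < x \<Longrightarrow> 0 < (exp x + exp (-x))/2 - 1 - (x::real)^2/2"
proof -
  assume x: "0 < x"
  have a: "1 + x + x^2/2 + x^3/6 < exp x" using exp_taylor3[of x] x by simp
  have b: "1 + (-x) + (-x)^2/2 + (-x)^3/6 < exp (-x)" using exp_taylor3[of "-x"] x by simp
  have "(-x)^2 = x^2" "(-x)^3 = - (x^3)" by simp_all
  then have "2 + x^2 < exp x + exp (-x)" using a b by linarith
  then show ?thesis by (simp add: field_simps)
qed

lemma const1_le: "0 < x \<Longrightarrow> const1 \<le> (exp (x/2) - 1)^2 / (exp x - 1 - x)"
  unfolding const1_def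
  by (rule cInf_lower) (auto intro!: bdd_belowI[where m=0] divide_nonneg_nonneg less_imp_le[OF D1pos])
lemma const2_le: "0 < x \<Longrightarrow> const2 \<le> (exp (x/2) - 1)^2 / (exp x - 1 - x - x^2/2)"
  unfolding const2_def
  by (rule cInf_lower) (auto intro!: bdd_belowI[where m=0] divide_nonneg_nonneg less_imp_le[OF D2pos])
lemma const3_le: "0 < x \<Longrightarrow> const3 \<le> (exp (x/2) - 1)^2 / ((exp x + exp (-x))/2 - 1 - x^2/2)"
  unfolding const3_def
  by (rule cInf_lower) (auto intro!: bdd_belowI[where m=0] divide_nonneg_nonneg less_imp_le[OF D3pos])

lemma transfer_int:
  assumes d: "distributed M lborel Y (\<lambda>x. ennreal (q x))" and q0: "\<And>x. 0 \<le> q x"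
    and g: "g \<in> borel_measurable borel" and i: "integrable M (\<lambda>\<omega>. g (Y \<omega>))"
  shows "has_bochner_integral lborel (\<lambda>x. q x * g x) (\<integral>\<omega>. g (Y \<omega>) \<partial>M)"
  using distributed_integrable[OF d, of g] distributed_integral[OF d, of g] g i q0
  by (simp add: has_bochner_integral_iff)

lemma transfer_nn:
  assumes d: "distributed M lborel Y (\<lambda>x. ennreal (q x))" and q0: "\<And>x. 0 \<le> q x"
    and g: "g \<in> borel_measurable borel" and g0: "\<And>x. 0 \<le> g x"
  shows "(\<integral>\<^sup>+\<omega>. ennreal (g (Y \<omega>)) \<partial>M) = (\<integral>\<^sup>+x. ennreal (g x * q x) \<partial>lborel)"
  using distributed_nn_integral[OF d, of "\<lambda>x. ennreal (g x)"] g g0 q0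
  by (simp add: ennreal_mult'' mult.commute)

lemma dens_setup:
  assumes P: "prob_space M" and lt: "chi2_normal M Y < ennreal c"
  obtains q C where "distributed M lborel Y (\<lambda>x. ennreal (q x))" "\<And>x. 0 \<le> q x"
    "q \<in> borel_measurable borel"
    "has_bochner_integral lborel (\<lambda>x. (q x / normal_density 0 1 x - 1)^2 * normal_density 0 1 x) C"
    "C < c"
proof -
  have ex: "\<exists>p. distributed M lborel Y p"
  proof (rule ccontr)
    assume "\<not> ?thesis"
    then have "chi2_normal M Y = \<infinity>" unfolding chi2_normal_def by (rule if_not_P)
    with lt show False by simp
  qed
  define p where "p = (SOME p. distributed M lborel Y p)"
  have dp: "distributed M lborel Y p" unfolding p_def using someI_ex[OF ex] .
  have pm[measurable]: "p \<in> borel_measurable borel" using dp by (simp add: distributed_def)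
  have "(\<integral>\<^sup>+x. p x * 1 \<partial>lborel) = (\<integral>\<^sup>+\<omega>. 1 \<partial>M)"
    using distributed_nn_integral[OF dp, of "\<lambda>_. 1"] by simp
  also have "\<dots> = 1" using P by (simp add: prob_space.emeasure_space_1)
  finally have "(\<integral>\<^sup>+x. p x \<partial>lborel) \<noteq> \<infinity>" by simp
  then have aefin: "AE x in lborel. p x \<noteq> \<infinity>" by (intro nn_integral_PInf_AE) auto
  define q where "q x = enn2real (p x)" for x
  have q0: "0 \<le> q x" for x by (simp add: q_def)
  have qm[measurable]: "q \<in> borel_measurable borel" unfolding q_def by measurable
  have dq: "distributed M lborel Y (\<lambda>x. ennreal (q x))"
  proof -
    have "AE x in lborel. p x = ennreal (q x)" using aefin
      by eventually_elim (simp add: q_def ennreal_enn2real_if)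
    then show ?thesis using dp distributed_cong_density[of p "\<lambda>x. ennreal (q x)" lborel M Y]
      by simp
  qed
  define K where "K = (\<integral>\<^sup>+x. ennreal ((q x / normal_density 0 1 x - 1)^2 * normal_density 0 1 x) \<partial>lborel)"
  have chi: "chi2_normal M Y = K"
    unfolding chi2_normal_def K_def using ex by (simp add: Let_def p_def[symmetric] q_def phi_eq)
  have "K \<noteq> \<infinity>" using lt chi by auto
  then have Ke: "K = ennreal (enn2real K)" by (simp add: ennreal_enn2real_if)
  have Cc: "enn2real K < c" using lt chi Ke by (metis enn2real_nonneg ennreal_less_iff)
  have "has_bochner_integral lborel (\<lambda>x. (q x / normal_density 0 1 x - 1)^2 * normal_density 0 1 x) (enn2real K)"
    by (rule has_bochner_integral_nn_integral) (auto simp: K_def[symmetric] Ke[symmetric])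
  then show ?thesis using that dq q0 qm Cc by blast
qed



lemma crit:
  fixes C D E :: real
  assumes "1 < E" "0 < D" "C < (E - 1)^2 / D"
  shows "C * (E*E*D) < (E*E - E)^2" "0 < E*E*D" "0 < E*E - E"
proof -
  have "C * D < (E-1)^2" using assms by (simp add: pos_less_divide_eq)
  moreover have "0 < E*E" using assms by simp
  ultimately have "(C * D) * (E*E) < (E-1)^2 * (E*E)" by (intro mult_strict_right_mono)
  then show "C * (E*E*D) < (E*E - E)^2" by (simp add: power2_eq_square algebra_simps)
  show "0 < E*E*D" using assms by simp
  have "E*E - E = E*(E-1)" by (simp add: algebra_simps)
  moreover have "0 < E*(E-1)" using assms by simp
  ultimately show "0 < E*E - E" by simp
qed

lemma expE:
  fixes t :: real
  defines "E \<equiv> exp (t^2/2)"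
  shows "exp (t^2) = E*E" "exp (2*t^2) = E*E*E*E" "exp (t^2/2) = E" "exp (-(t^2)) * (E*E) = 1"
    "t \<noteq> 0 \<Longrightarrow> 1 < E"
proof -
  show "exp (t^2) = E*E" unfolding E_def exp_add[symmetric] by simp
  show "exp (2*t^2) = E*E*E*E" unfolding E_def exp_add[symmetric] by simp
  show "exp (t^2/2) = E" unfolding E_def ..
  show "exp (-(t^2)) * (E*E) = 1" unfolding E_def exp_add[symmetric] by simp
  show "t \<noteq> 0 \<Longrightarrow> 1 < E" unfolding E_def by simp
qed

lemma cosh_meas[measurable]: "(\<lambda>x. cosh (t*x)) \<in> borel_measurable borel" for t :: real
  by (intro borel_measurable_continuous_onI continuous_intros)

lemma case1:
  fixes q :: "real \<Rightarrow> real" and t :: real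
  assumes qm: "q \<in> borel_measurable borel" and q0: "\<And>x. 0 \<le> q x"
    and hC: "has_bochner_integral lborel (\<lambda>x. (q x / normal_density 0 1 x - 1)^2 * normal_density 0 1 x) C"
    and Cc: "C < const1"
    and h1: "has_bochner_integral lborel (\<lambda>x. q x * 1) 1"
    and hx: "has_bochner_integral lborel (\<lambda>x. q x * x) 0"
    and t: "t \<noteq> 0"
  shows "(\<integral>\<^sup>+x. ennreal (exp (t*x) * q x) \<partial>lborel) < ennreal (exp (t^2))"
proof -
  define E where "E = exp (t^2/2)"
  note ee = expE[of t, folded E_def]
  have s0: "0 < t^2" using t by simp
  have E1: "1 < E" using ee t by simp
  define D where "D = exp (t^2) - 1 - t^2"
  have D0: "0 < D" unfolding D_def using D1pos[OF s0] .
  have CR: "C < (E - 1)^2 / D"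
  proof -
    have "const1 \<le> (E - 1)^2 / D" using const1_le[OF s0] unfolding D_def E_def .
    then show ?thesis using Cc by linarith
  qed
  note cr = crit[OF E1 D0 CR]
  have hH: "has_bochner_integral lborel (\<lambda>x. normal_density 0 1 x * exp (t*x)) E"
    using L1[of t 1 0 0] by (simp add: E_def)
  have hV: "has_bochner_integral lborel (\<lambda>x. normal_density 0 1 x * (exp (t*x) - (E + (t*E)*x + 0*x^2))^2) (E*E*D)"
  proof -
    have veq: "exp (2*t^2) - 2*(exp (t^2/2)*(E + t*E*t + 0*(1+t^2))) + (E^2 + (t*E)^2 + 2*E*0 + 3*0^2) = E*E*D"
      unfolding ee(2) E_def[symmetric] D_def ee(1) by (simp add: power2_eq_square algebra_simps)
    show ?thesis by (rule has_bochner_integral_cong[THEN iffD1, OF refl _ veq Vexp[of t E "t*E" 0]]) (rule refl)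
  qed
  have hP: "has_bochner_integral lborel (\<lambda>x. q x * (E + (t*E)*x + 0*x^2)) (E + 0)"
  proof -
    have "has_bochner_integral lborel (\<lambda>x. E * (q x * 1) + (t*E) * (q x * x)) (E * 1 + (t*E) * 0)"
      by (intro has_bochner_integral_add has_bochner_integral_mult_right h1 hx)
    then show ?thesis
      by (rule has_bochner_integral_cong[THEN iffD1, rotated -1]) (auto simp: algebra_simps)
  qed
  have "(\<integral>\<^sup>+x. ennreal (exp (t*x) * q x) \<partial>lborel) < ennreal (E + (E*E - E))"
    by (rule main[OF qm q0 _ _ hH hV hP hC cr(2) cr(3) cr(1)]) auto
  then show ?thesis unfolding ee(1) by simp
qed

lemma case2:
  fixes q :: "real \<Rightarrow> real" and t :: real
  assumes qm: "q \<in> borel_measurable borel" and q0: "\<And>x. 0 \<le> q x"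
    and hC: "has_bochner_integral lborel (\<lambda>x. (q x / normal_density 0 1 x - 1)^2 * normal_density 0 1 x) C"
    and Cc: "C < const2"
    and h1: "has_bochner_integral lborel (\<lambda>x. q x * 1) 1"
    and hx: "has_bochner_integral lborel (\<lambda>x. q x * x) 0"
    and hx2: "has_bochner_integral lborel (\<lambda>x. q x * x^2) 1"
    and t: "t \<noteq> 0"
  shows "(\<integral>\<^sup>+x. ennreal (exp (t*x) * q x) \<partial>lborel) < ennreal (exp (t^2))"
proof -
  define E where "E = exp (t^2/2)"
  note ee = expE[of t, folded E_def]
  have s0: "0 < t^2" using t by simp
  have E1: "1 < E" using ee t by simp
  define D where "D = exp (t^2) - 1 - t^2 - (t^2)^2/2"
  have D0: "0 < D" unfolding D_def using D2pos[OF s0] .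
  have CR: "C < (E - 1)^2 / D"
  proof -
    have "const2 \<le> (E - 1)^2 / D" using const2_le[OF s0] unfolding D_def E_def .
    then show ?thesis using Cc by linarith
  qed
  note cr = crit[OF E1 D0 CR]
  have hH: "has_bochner_integral lborel (\<lambda>x. normal_density 0 1 x * exp (t*x)) E"
    using L1[of t 1 0 0] by (simp add: E_def)
  have hV: "has_bochner_integral lborel (\<lambda>x. normal_density 0 1 x * (exp (t*x) - (E*(1-t^2/2) + (t*E)*x + (E*t^2/2)*x^2))^2) (E*E*D)"
  proof -
    have veq: "exp (2*t^2) - 2*(exp (t^2/2)*(E*(1-t^2/2) + t*E*t + E*t^2/2*(1+t^2))) + ((E*(1-t^2/2))^2 + (t*E)^2 + 2*(E*(1-t^2/2))*(E*t^2/2) + 3*(E*t^2/2)^2) = E*E*D"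
      unfolding ee(2) E_def[symmetric] D_def ee(1) by (simp add: power2_eq_square algebra_simps)
    show ?thesis by (rule has_bochner_integral_cong[THEN iffD1, OF refl _ veq Vexp[of t "E*(1-t^2/2)" "t*E" "E*t^2/2"]]) (rule refl)
  qed
  have hP: "has_bochner_integral lborel (\<lambda>x. q x * (E*(1-t^2/2) + (t*E)*x + (E*t^2/2)*x^2)) (E*(1-t^2/2) + E*t^2/2)"
  proof -
    have "has_bochner_integral lborel (\<lambda>x. (E*(1-t^2/2)) * (q x * 1) + (t*E) * (q x * x) + (E*t^2/2) * (q x * x^2))
       ((E*(1-t^2/2)) * 1 + (t*E) * 0 + (E*t^2/2) * 1)"
      by (intro has_bochner_integral_add has_bochner_integral_mult_right h1 hx hx2)
    then show ?thesis
      by (rule has_bochner_integral_cong[THEN iffD1, rotated -1]) (auto simp: algebra_simps)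
  qed
  have "(\<integral>\<^sup>+x. ennreal (exp (t*x) * q x) \<partial>lborel) < ennreal (E + (E*E - E))"
    by (rule main[OF qm q0 _ _ hH hV hP hC cr(2) cr(3) cr(1)]) auto
  then show ?thesis unfolding ee(1) by simp
qed

lemma case3:
  fixes q :: "real \<Rightarrow> real" and t :: real
  assumes qm: "q \<in> borel_measurable borel" and q0: "\<And>x. 0 \<le> q x"
    and hC: "has_bochner_integral lborel (\<lambda>x. (q x / normal_density 0 1 x - 1)^2 * normal_density 0 1 x) C"
    and Cc: "C < const3"
    and h1: "has_bochner_integral lborel (\<lambda>x. q x * 1) 1"
    and hx: "has_bochner_integral lborel (\<lambda>x. q x * x) 0"
    and hx2: "has_bochner_integral lborel (\<lambda>x. q x * x^2) 1"
    and t: "t \<noteq> 0"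
  shows "(\<integral>\<^sup>+x. ennreal (cosh (t*x) * q x) \<partial>lborel) < ennreal (exp (t^2))"
proof -
  define E where "E = exp (t^2/2)"
  note ee = expE[of t, folded E_def]
  have s0: "0 < t^2" using t by simp
  have E1: "1 < E" using ee t by simp
  define D where "D = (exp (t^2) + exp (-(t^2)))/2 - 1 - (t^2)^2/2"
  have D0: "0 < D" unfolding D_def using D3pos[OF s0] .
  have CR: "C < (E - 1)^2 / D"
  proof -
    have "const3 \<le> (E - 1)^2 / D" using const3_le[OF s0] unfolding D_def E_def .
    then show ?thesis using Cc by linarith
  qed
  note cr = crit[OF E1 D0 CR]
  have hH: "has_bochner_integral lborel (\<lambda>x. normal_density 0 1 x * cosh (t*x)) E"
  proof -
    have "has_bochner_integral lborel (\<lambda>x. (1/2) * (normal_density 0 1 x * exp (t*x) * (1 + 0*x + 0*x^2))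
        + (1/2) * (normal_density 0 1 x * exp ((-t)*x) * (1 + 0*x + 0*x^2)))
      ((1/2) * (exp (t^2/2) * (1 + 0*t + 0*(1+t^2))) + (1/2) * (exp ((-t)^2/2) * (1 + 0*(-t) + 0*(1+(-t)^2))))"
      by (intro has_bochner_integral_add has_bochner_integral_mult_right L1)
    then show ?thesis
      by (rule has_bochner_integral_cong[THEN iffD1, rotated -1])
         (auto simp: E_def cosh_field_def algebra_simps add_divide_distrib)
  qed
  have em: "exp (-(t^2)) = 1/(E*E)" using ee(4) E1 by (simp add: field_simps)
  have hV: "has_bochner_integral lborel (\<lambda>x. normal_density 0 1 x * (cosh (t*x) - (E*(1-t^2/2) + 0*x + (E*t^2/2)*x^2))^2) (E*E*D)"
  proof -
    have veq: "(exp (2*t^2) + 1)/2 - 2*(exp (t^2/2)*(E*(1-t^2/2) + (E*t^2/2)*(1+t^2))) + ((E*(1-t^2/2))^2 + 0^2 + 2*(E*(1-t^2/2))*(E*t^2/2) + 3*(E*t^2/2)^2)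
      = E*E*D"
      unfolding ee(2) E_def[symmetric] D_def ee(1) em using E1 by (simp add: power2_eq_square field_simps)
    show ?thesis by (rule has_bochner_integral_cong[THEN iffD1, OF refl _ veq Vcosh[of t "E*(1-t^2/2)" 0 "E*t^2/2"]]) (rule refl)
  qed
  have hP: "has_bochner_integral lborel (\<lambda>x. q x * (E*(1-t^2/2) + 0*x + (E*t^2/2)*x^2)) (E*(1-t^2/2) + E*t^2/2)"
  proof -
    have "has_bochner_integral lborel (\<lambda>x. (E*(1-t^2/2)) * (q x * 1) + (E*t^2/2) * (q x * x^2))
       ((E*(1-t^2/2)) * 1 + (E*t^2/2) * 1)"
      by (intro has_bochner_integral_add has_bochner_integral_mult_right h1 hx2)
    then show ?thesis
      by (rule has_bochner_integral_cong[THEN iffD1, rotated -1]) (auto simp: algebra_simps)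
  qed
  have "(\<integral>\<^sup>+x. ennreal (cosh (t*x) * q x) \<partial>lborel) < ennreal (E + (E*E - E))"
    by (rule main[OF qm q0 _ _ hH hV hP hC cr(2) cr(3) cr(1)]) auto
  then show ?thesis unfolding ee(1) by simp
qed



lemma cosh_split: "ennreal (cosh (t*y)) = ennreal (exp (t*y)/2) + ennreal (exp (t*(-y))/2)" for t y :: real
proof -
  have c: "cosh (t*y) = exp (t*y)/2 + exp (t*(-y))/2" by (simp add: cosh_field_def add_divide_distrib)
  have "ennreal (exp (t*y)/2 + exp (t*(-y))/2) = ennreal (exp (t*y)/2) + ennreal (exp (t*(-y))/2)"
    by (rule ennreal_plus) simp_all
  then show ?thesis unfolding c .
qed

theorem corollary2:
  fixes M :: "'a measure" and Y :: "'a \<Rightarrow> real"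
  assumes "prob_space M"
    and "Y \<in> borel_measurable M"
    and "(integrable M Y \<and> (\<integral>\<omega>. Y \<omega> \<partial>M) = 0
            \<and> chi2_normal M Y < ennreal const1)
         \<or> (integrable M Y \<and> (\<integral>\<omega>. Y \<omega> \<partial>M) = 0
            \<and> integrable M (\<lambda>\<omega>. (Y \<omega>)^2) \<and> (\<integral>\<omega>. (Y \<omega>)^2 \<partial>M) = 1
            \<and> chi2_normal M Y < ennreal const2)
         \<or> (distr M borel (\<lambda>\<omega>. - Y \<omega>) = distr M borel Y
            \<and> integrable M Y \<and> (\<integral>\<omega>. Y \<omega> \<partial>M) = 0
            \<and> integrable M (\<lambda>\<omega>. (Y \<omega>)^2) \<and> (\<integral>\<omega>. (Y \<omega>)^2 \<partial>M) = 1
            \<and> chi2_normal M Y < ennreal const3)"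
  shows "\<forall>t::real. t \<noteq> 0 \<longrightarrow>
           (\<integral>\<^sup>+ \<omega>. ennreal (exp (t * Y \<omega>)) \<partial>M) < ennreal (exp (t^2))"
proof (intro allI impI)
  fix t :: real assume t: "t \<noteq> 0"
  have P: "prob_space M" by fact
  interpret prob_space M by (rule P)
  have Ym[measurable]: "Y \<in> borel_measurable M" by fact
  have one: "has_bochner_integral lborel (\<lambda>x. q x * 1) 1"
    if dq: "distributed M lborel Y (\<lambda>x. ennreal (q x))" and q0: "\<And>x. 0 \<le> q x" for q
  proof -
    have i: "integrable M (\<lambda>_. 1::real)" by simp
    have e: "(\<integral>\<omega>. 1 \<partial>M) = (1::real)" by (simp add: prob_space)
    show ?thesis using transfer_int[OF dq q0 _ i] unfolding e by simp
  qed
  have mom1: "has_bochner_integral lborel (\<lambda>x. q x * x) 0"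
    if dq: "distributed M lborel Y (\<lambda>x. ennreal (q x))" and q0: "\<And>x. 0 \<le> q x"
      and "integrable M Y" "(\<integral>\<omega>. Y \<omega> \<partial>M) = 0" for q
    using transfer_int[OF dq q0, of "\<lambda>x. x"] that by simp
  have mom2: "has_bochner_integral lborel (\<lambda>x. q x * x^2) 1"
    if dq: "distributed M lborel Y (\<lambda>x. ennreal (q x))" and q0: "\<And>x. 0 \<le> q x"
      and "integrable M (\<lambda>\<omega>. (Y \<omega>)^2)" "(\<integral>\<omega>. (Y \<omega>)^2 \<partial>M) = 1" for q
    using transfer_int[OF dq q0, of "\<lambda>x. x^2"] that by simp
  have nnexp: "(\<integral>\<^sup>+ \<omega>. ennreal (exp (t * Y \<omega>)) \<partial>M) = (\<integral>\<^sup>+x. ennreal (exp (t*x) * q x) \<partial>lborel)"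
    if dq: "distributed M lborel Y (\<lambda>x. ennreal (q x))" and q0: "\<And>x. 0 \<le> q x" for q
    using transfer_nn[OF dq q0, of "\<lambda>x. exp (t*x)"] by simp
  from assms(3) consider
      (c1) "integrable M Y" "(\<integral>\<omega>. Y \<omega> \<partial>M) = 0" "chi2_normal M Y < ennreal const1"
    | (c2) "integrable M Y" "(\<integral>\<omega>. Y \<omega> \<partial>M) = 0" "integrable M (\<lambda>\<omega>. (Y \<omega>)^2)"
        "(\<integral>\<omega>. (Y \<omega>)^2 \<partial>M) = 1" "chi2_normal M Y < ennreal const2"
    | (c3) "distr M borel (\<lambda>\<omega>. - Y \<omega>) = distr M borel Y" "integrable M Y" "(\<integral>\<omega>. Y \<omega> \<partial>M) = 0"
        "integrable M (\<lambda>\<omega>. (Y \<omega>)^2)" "(\<integral>\<omega>. (Y \<omega>)^2 \<partial>M) = 1" "chi2_normal M Y < ennreal const3"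
    by blast
  then show "(\<integral>\<^sup>+ \<omega>. ennreal (exp (t * Y \<omega>)) \<partial>M) < ennreal (exp (t^2))"
  proof cases
    case c1
    obtain q C where dq: "distributed M lborel Y (\<lambda>x. ennreal (q x))" and q0: "\<And>x. 0 \<le> q x"
      and qm: "q \<in> borel_measurable borel"
      and hC: "has_bochner_integral lborel (\<lambda>x. (q x / normal_density 0 1 x - 1)^2 * normal_density 0 1 x) C"
      and Cc: "C < const1"
      using dens_setup[OF P c1(3)] by blast
    show ?thesis
      unfolding nnexp[OF dq q0]
      by (rule case1[OF qm q0 hC Cc one[OF dq q0] mom1[OF dq q0 c1(1,2)] t])
  next
    case c2
    obtain q C where dq: "distributed M lborel Y (\<lambda>x. ennreal (q x))" and q0: "\<And>x. 0 \<le> q x"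
      and qm: "q \<in> borel_measurable borel"
      and hC: "has_bochner_integral lborel (\<lambda>x. (q x / normal_density 0 1 x - 1)^2 * normal_density 0 1 x) C"
      and Cc: "C < const2"
      using dens_setup[OF P c2(5)] by blast
    show ?thesis
      unfolding nnexp[OF dq q0]
      by (rule case2[OF qm q0 hC Cc one[OF dq q0] mom1[OF dq q0 c2(1,2)] mom2[OF dq q0 c2(3,4)] t])
  next
    case c3
    obtain q C where dq: "distributed M lborel Y (\<lambda>x. ennreal (q x))" and q0: "\<And>x. 0 \<le> q x"
      and qm: "q \<in> borel_measurable borel"
      and hC: "has_bochner_integral lborel (\<lambda>x. (q x / normal_density 0 1 x - 1)^2 * normal_density 0 1 x) C"
      and Cc: "C < const3"
      using dens_setup[OF P c3(6)] by blast
    have sym: "(\<integral>\<^sup>+\<omega>. g (- Y \<omega>) \<partial>M) = (\<integral>\<^sup>+\<omega>. g (Y \<omega>) \<partial>M)"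
      if gm[measurable]: "g \<in> borel_measurable borel" for g :: "real \<Rightarrow> ennreal"
    proof -
      have "(\<integral>\<^sup>+\<omega>. g (- Y \<omega>) \<partial>M) = integral\<^sup>N (distr M borel (\<lambda>\<omega>. - Y \<omega>)) g"
        by (subst nn_integral_distr) auto
      also have "\<dots> = integral\<^sup>N (distr M borel Y) g" using c3(1) by simp
      also have "\<dots> = (\<integral>\<^sup>+\<omega>. g (Y \<omega>) \<partial>M)"
        by (subst nn_integral_distr) auto
      finally show ?thesis .
    qed
    define I where "I = (\<integral>\<^sup>+\<omega>. ennreal (exp (t * Y \<omega>) / 2) \<partial>M)"
    have a: "(\<integral>\<^sup>+ \<omega>. ennreal (exp (t * Y \<omega>)) \<partial>M) = I + I"
    proof -
      have "(\<integral>\<^sup>+ \<omega>. ennreal (exp (t * Y \<omega>)) \<partial>M)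
          = (\<integral>\<^sup>+ \<omega>. ennreal (exp (t * Y \<omega>) / 2) + ennreal (exp (t * Y \<omega>) / 2) \<partial>M)"
        by (intro nn_integral_cong) (simp add: ennreal_plus[symmetric])
      also have "\<dots> = I + I" unfolding I_def by (rule nn_integral_add) auto
      finally show ?thesis .
    qed
    have b: "(\<integral>\<^sup>+ \<omega>. ennreal (cosh (t * Y \<omega>)) \<partial>M) = I + I"
    proof -
      have "(\<integral>\<^sup>+ \<omega>. ennreal (cosh (t * Y \<omega>)) \<partial>M)
          = (\<integral>\<^sup>+ \<omega>. ennreal (exp (t * Y \<omega>) / 2) + ennreal (exp (t * (- Y \<omega>)) / 2) \<partial>M)"
        by (intro nn_integral_cong cosh_split)
      also have "\<dots> = I + (\<integral>\<^sup>+ \<omega>. ennreal (exp (t * (- Y \<omega>)) / 2) \<partial>M)"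
        unfolding I_def by (rule nn_integral_add) auto
      also have "(\<integral>\<^sup>+ \<omega>. ennreal (exp (t * (- Y \<omega>)) / 2) \<partial>M) = I"
        unfolding I_def using sym[of "\<lambda>y. ennreal (exp (t * y) / 2)"] by simp
      finally show ?thesis .
    qed
    have "(\<integral>\<^sup>+ \<omega>. ennreal (cosh (t * Y \<omega>)) \<partial>M) = (\<integral>\<^sup>+x. ennreal (cosh (t*x) * q x) \<partial>lborel)"
      using transfer_nn[OF dq q0, of "\<lambda>x. cosh (t*x)"] by simp
    then show ?thesis
      using case3[OF qm q0 hC Cc one[OF dq q0] mom1[OF dq q0 c3(2,3)] mom2[OF dq q0 c3(4,5)] t] a b
      by simp
  qed
qed

end
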